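(* Consider the following power-of-two-choices balls-into-bins process with resizing. Let $M_0$ be a positive integer (the initial number of bins), and let each ball $x$ have two independent uniformly random hash values $H_1(x), H_2(x)$ (independent across balls) from a range that is a multiple of every number of bins that occurs. When the current number of bins is $m$, ball $x$'s two candidate bins are $h_1(x,m) = H_1(x) \bmod m$ and $h_2(x,m) = H_2(x) \bmod m$. Start with $M_0$ empty bins and perform $N \le \mathrm{poly}(M_0)$ ball insertions; each inserted ball $x$ is placed in whichever of its two candidate bins $h_1(x,m), h_2(x,m)$ currently contains fewer balls. Whenever the current number $n$ of balls in the system surpasses $m/4$, where $m$ is the current number of bins, the number of bins is doubled to $2m$: each bin $i$ splits into bins $i$ and $m+i$, and each ball stored in bin $i$ as its candidate bin $h_k(x,m)=i$ is moved to bin $h_k(x,2m) \in \{i, m+i\}$. Then at any given moment, the number of balls in the fullest bin is $O(\log\log N)$ with probability $1 - 1/\mathrm{poly}(N)$.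
   Context: $\mathrm{poly}(\cdot)$ denotes a polynomial; "with probability $1-1/\mathrm{poly}(N)$" means for any desired constant exponent, with a suitable constant in the $O(\cdot)$. *)

theory Defs
  imports "HOL-Probability.Probability"
begin

text \<open>Balls are 0,1,2,...; ball x is the (x+1)-st inserted ball.
  A hash assignment H maps ball x to the pair (H1 x, H2 x).\<close>

text \<open>Resizing: while the number n of balls exceeds m/4 (i.e. 4n > m), double m.\<close>
definition resize :: "nat \<Rightarrow> nat \<Rightarrow> nat" where
  "resize n m = m * 2 ^ (LEAST j. 4 * n \<le> m * 2 ^ j)"

fun bins :: "nat \<Rightarrow> nat \<Rightarrow> nat" where
  "bins M0 0 = M0"
| "bins M0 (Suc t) = resize (Suc t) (bins M0 t)"

text \<open>Bin of ball x when there are m bins, given choice vector c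
  (c x = True: ball x is stored via its first hash, False: via its second).
  Moving ball x on a split from bin h_k(x,m) to h_k(x,2m) keeps this formula valid.\<close>
definition pos :: "(nat \<Rightarrow> nat \<times> nat) \<Rightarrow> (nat \<Rightarrow> bool) \<Rightarrow> nat \<Rightarrow> nat \<Rightarrow> nat" where
  "pos H c x m = (if c x then fst (H x) else snd (H x)) mod m"

definition load :: "(nat \<Rightarrow> nat \<times> nat) \<Rightarrow> (nat \<Rightarrow> bool) \<Rightarrow> nat \<Rightarrow> nat \<Rightarrow> nat \<Rightarrow> nat" where
  "load H c t m i = card {x. x < t \<and> pos H c x m = i}"

text \<open>Ball t goes to the less loaded of its two
  candidate bins h1(t,m), h2(t,m) (m = bins before its insertion); ties are broken by
  an arbitrary fixed rule tb (tb t = True: first candidate).\<close>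
fun choice :: "nat \<Rightarrow> (nat \<Rightarrow> bool) \<Rightarrow> (nat \<Rightarrow> nat \<times> nat) \<Rightarrow> nat \<Rightarrow> (nat \<Rightarrow> bool)" where
  "choice M0 tb H 0 = (\<lambda>x. True)"
| "choice M0 tb H (Suc t) =
     (let c = choice M0 tb H t; m = bins M0 t;
          l1 = load H c t m (fst (H t) mod m);
          l2 = load H c t m (snd (H t) mod m)
      in c(t := (l1 < l2 \<or> (l1 = l2 \<and> tb t))))"

definition max_load :: "nat \<Rightarrow> (nat \<Rightarrow> bool) \<Rightarrow> (nat \<Rightarrow> nat \<times> nat) \<Rightarrow> nat \<Rightarrow> nat" where
  "max_load M0 tb H t =
     Max ((\<lambda>i. load H (choice M0 tb H t) t (bins M0 t) i) ` {..<bins M0 t})"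

definition hash_pmf :: "nat \<Rightarrow> nat \<Rightarrow> (nat \<Rightarrow> nat \<times> nat) pmf" where
  "hash_pmf N D = Pi_pmf {..<N} (0, 0) (\<lambda>_. pmf_of_set ({..<D} \<times> {..<D}))"

end

theory Submission
  imports Defs "HOL-Analysis.Harmonic_Numbers" "HOL-Real_Asymp.Real_Asymp"
begin

lemma resize_ge: assumes "m > 0" shows "4 * n \<le> resize n m" "m dvd resize n m" "m \<le> resize n m"
proof -
  have ex: "\<exists>j. 4 * n \<le> m * 2 ^ j"
  proof
    have "4 * n < 2 ^ (4*n)" by (rule less_exp)
    also have "\<dots> \<le> m * 2 ^ (4*n)" using assms by simp
    finally show "4 * n \<le> m * 2 ^ (4*n)" by simp
  qed
  show "4 * n \<le> resize n m" unfolding resize_def using LeastI_ex[OF ex] .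
  show "m dvd resize n m" unfolding resize_def by simp
  show "m \<le> resize n m" unfolding resize_def using assms by simp
qed

lemma bins_pos: "0 < M0 \<Longrightarrow> 0 < bins M0 s"
  by (induction s) (auto simp: resize_def)

lemma bins_ge: "0 < M0 \<Longrightarrow> M0 \<le> bins M0 s"
  by (induction s) (auto intro: order_trans[OF _ resize_ge(3)] bins_pos)

lemma bins_ge4: assumes "0 < M0" shows "4 * s \<le> bins M0 s"
proof (cases s)
  case (Suc n) then show ?thesis using resize_ge(1)[OF bins_pos[OF assms, of n], of "Suc n"] by simp
qed simp

lemma bins_dvd: assumes "0 < M0" "s \<le> s'" shows "bins M0 s dvd bins M0 s'"
  using assms(2) proof (induction s' rule: dec_induct)
  case base then show ?case by simp
next
  case (step n)
  then show ?case using resize_ge(2)[OF bins_pos[OF \<open>0<M0\<close>], of n] dvd_trans by auto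
qed

lemma load_cong: "(\<And>z. z < t \<Longrightarrow> c z = c' z) \<Longrightarrow> (\<And>z. z < t \<Longrightarrow> H z = H' z) \<Longrightarrow> load H c t m i = load H' c' t m i"
  unfolding load_def pos_def by (rule arg_cong[where f=card]) auto

lemma choice_stable: "y < t \<Longrightarrow> choice M0 tb H t y = choice M0 tb H (Suc y) y"
proof (induction t)
  case 0 then show ?case by simp
next
  case (Suc t)
  then show ?case by (cases "y = t") (auto simp: Let_def)
qed

lemma choice_cong: "(\<And>z. z < t \<Longrightarrow> H z = H' z) \<Longrightarrow> choice M0 tb H t = choice M0 tb H' t"
proof (induction t)
  case 0 then show ?case by simp
next
  case (Suc t)
  have IH: "choice M0 tb H t = choice M0 tb H' t" using Suc by auto
  have l: "\<And>i. load H (choice M0 tb H' t) t (bins M0 t) i = load H' (choice M0 tb H' t) t (bins M0 t) i"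
    using Suc.prems by (intro load_cong) auto
  have "H t = H' t" using Suc.prems by simp
  then show ?case using Suc.prems by (simp add: Let_def IH l)
qed

definition Lv :: "nat \<Rightarrow> (nat \<Rightarrow> bool) \<Rightarrow> (nat \<Rightarrow> nat \<times> nat) \<Rightarrow> nat \<Rightarrow> nat" where
  "Lv M0 tb H x = min (load H (choice M0 tb H x) x (bins M0 x) (fst (H x) mod bins M0 x))
                      (load H (choice M0 tb H x) x (bins M0 x) (snd (H x) mod bins M0 x))"

lemma Lv_chosen: "load H (choice M0 tb H x) x (bins M0 x) (pos H (choice M0 tb H (Suc x)) x (bins M0 x)) = Lv M0 tb H x"
  unfolding Lv_def pos_def by (auto simp: Let_def)

lemma lemmaA:
  assumes M0: "0 < M0" and dv: "\<And>y. y < t \<Longrightarrow> bins M0 y dvd m"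
    and ld: "Suc k \<le> load H (choice M0 tb H t) t m i"
  shows "\<exists>y<t. pos H (choice M0 tb H t) y m = i \<and> k \<le> Lv M0 tb H y"
proof -
  define c where "c = choice M0 tb H t"
  define S where "S = {x. x < t \<and> pos H c x m = i}"
  have fin: "finite S" unfolding S_def by auto
  have cS: "Suc k \<le> card S" using ld unfolding S_def c_def load_def .
  then have ne: "S \<noteq> {}" by auto
  define y where "y = Max S"
  have yS: "y \<in> S" unfolding y_def using fin ne by (rule Max_in)
  then have yt: "y < t" and py: "pos H c y m = i" unfolding S_def by auto
  have sub: "S - {y} \<subseteq> {x. x < y \<and> pos H (choice M0 tb H y) x (bins M0 y) = pos H (choice M0 tb H (Suc y)) y (bins M0 y)}"
  proof
    fix x assume xS: "x \<in> S - {y}"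
    then have "x \<le> y" unfolding y_def using fin by auto
    with xS have xy: "x < y" by auto
    have xt: "x < t" using xS unfolding S_def by auto
    have px: "pos H c x m = i" using xS unfolding S_def by auto
    have d: "bins M0 y dvd m" using dv yt .
    have cx: "c x = choice M0 tb H y x"
      unfolding c_def using choice_stable[OF xt] choice_stable[OF xy] by simp
    have cy: "c y = choice M0 tb H (Suc y) y"
      unfolding c_def using choice_stable[OF yt] by simp
    have "pos H (choice M0 tb H y) x (bins M0 y) = pos H c x (bins M0 y)"
      by (simp add: pos_def cx)
    also have "\<dots> = pos H c x m mod bins M0 y" by (simp add: pos_def mod_mod_cancel[OF d])
    finally have 1: "pos H (choice M0 tb H y) x (bins M0 y) = i mod bins M0 y" using px by simp
    have "pos H (choice M0 tb H (Suc y)) y (bins M0 y) = pos H c y (bins M0 y)"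
      by (simp add: pos_def cy)
    also have "\<dots> = pos H c y m mod bins M0 y" by (simp add: pos_def mod_mod_cancel[OF d])
    finally have 2: "pos H (choice M0 tb H (Suc y)) y (bins M0 y) = i mod bins M0 y" using py by simp
    show "x \<in> {x. x < y \<and> pos H (choice M0 tb H y) x (bins M0 y) = pos H (choice M0 tb H (Suc y)) y (bins M0 y)}"
      using xy 1 2 by simp
  qed
  have "card (S - {y}) \<le> Lv M0 tb H y"
    using card_mono[OF _ sub] Lv_chosen unfolding load_def by auto
  moreover have "card (S - {y}) = card S - 1" using yS fin by simp
  ultimately have "k \<le> Lv M0 tb H y" using cS by simp
  then show ?thesis using yt py c_def by auto
qed

definition mu :: "nat \<Rightarrow> (nat \<Rightarrow> bool) \<Rightarrow> (nat \<Rightarrow> nat \<times> nat) \<Rightarrow> nat \<Rightarrow> nat \<Rightarrow> nat" where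
  "mu M0 tb H k s = card {x. x < s \<and> k \<le> Lv M0 tb H x}"

lemma corB:
  assumes M0: "0 < M0" and dv: "\<And>y. y < t \<Longrightarrow> bins M0 y dvd m"
  shows "card {i. i < m \<and> Suc k \<le> load H (choice M0 tb H t) t m i} \<le> mu M0 tb H k t"
proof -
  define f where "f i = (SOME y. y<t \<and> pos H (choice M0 tb H t) y m = i \<and> k \<le> Lv M0 tb H y)" for i
  have f: "f i < t \<and> pos H (choice M0 tb H t) (f i) m = i \<and> k \<le> Lv M0 tb H (f i)"
    if "i \<in> {i. i < m \<and> Suc k \<le> load H (choice M0 tb H t) t m i}" for i
  proof -
    have ld: "Suc k \<le> load H (choice M0 tb H t) t m i" using that by simp
    have "\<exists>y. y<t \<and> pos H (choice M0 tb H t) y m = i \<and> k \<le> Lv M0 tb H y"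
      using lemmaA[OF M0 dv ld] by blast
    then show ?thesis unfolding f_def by (rule someI_ex)
  qed
  show ?thesis unfolding mu_def
  proof (rule card_inj_on_le)
    show "inj_on f {i. i < m \<and> Suc k \<le> load H (choice M0 tb H t) t m i}"
    proof (rule inj_onI)
      fix i j assume i: "i \<in> {i. i < m \<and> Suc k \<le> load H (choice M0 tb H t) t m i}"
        and j: "j \<in> {i. i < m \<and> Suc k \<le> load H (choice M0 tb H t) t m i}" and e: "f i = f j"
      have "i = pos H (choice M0 tb H t) (f i) m" using f[OF i] by simp
      also have "\<dots> = pos H (choice M0 tb H t) (f j) m" using e by simp
      also have "\<dots> = j" using f[OF j] by simp
      finally show "i = j" .
    qed
    show "f ` {i. i < m \<and> Suc k \<le> load H (choice M0 tb H t) t m i} \<subseteq> {x. x < t \<and> k \<le> Lv M0 tb H x}"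
      using f by auto
  qed auto
qed

lemma chain:
  assumes M0: "0 < M0"
  shows "y < t \<Longrightarrow> k + Suc j \<le> Lv M0 tb H y \<Longrightarrow> Suc j \<le> mu M0 tb H (Suc k) t"
proof (induction j arbitrary: y t)
  case 0
  then have "y \<in> {x. x < t \<and> Suc k \<le> Lv M0 tb H x}" by auto
  then have "{x. x < t \<and> Suc k \<le> Lv M0 tb H x} \<noteq> {}" by blast
  moreover have "finite {x. x < t \<and> Suc k \<le> Lv M0 tb H x}" by simp
  ultimately have "0 < card {x. x < t \<and> Suc k \<le> Lv M0 tb H x}" by (simp add: card_gt_0_iff)
  then show ?case unfolding mu_def by simp
next
  case (Suc j)
  have "Suc (k + Suc j) \<le> load H (choice M0 tb H y) y (bins M0 y) (fst (H y) mod bins M0 y)"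
    using Suc.prems(2) unfolding Lv_def by simp
  from lemmaA[OF M0 _ this] obtain z where z: "z < y" "k + Suc j \<le> Lv M0 tb H z"
    using bins_dvd[OF M0] by (meson less_imp_le)
  have "Suc j \<le> mu M0 tb H (Suc k) y" using Suc.IH[OF z] .
  moreover have "insert y {x. x < y \<and> Suc k \<le> Lv M0 tb H x} \<subseteq> {x. x < t \<and> Suc k \<le> Lv M0 tb H x}"
    using Suc.prems by auto
  then have "card (insert y {x. x < y \<and> Suc k \<le> Lv M0 tb H x}) \<le> mu M0 tb H (Suc k) t"
    unfolding mu_def by (intro card_mono) auto
  ultimately show ?case unfolding mu_def by simp
qed

lemma Pi_prod_bound:
  fixes f :: "nat \<Rightarrow> (nat \<Rightarrow> 'b) \<Rightarrow> ennreal" and g :: "nat \<Rightarrow> ennreal"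
  assumes dep: "\<And>x H H'. x < n \<Longrightarrow> (\<And>y. y \<le> x \<Longrightarrow> H y = H' y) \<Longrightarrow> f x H = f x H'"
  and cond: "\<And>x H. x < n \<Longrightarrow> (\<integral>\<^sup>+v. f x (H(x:=v)) \<partial>measure_pmf U) \<le> g x"
  shows "(\<integral>\<^sup>+H. (\<Prod>x<n. f x H) \<partial>measure_pmf (Pi_pmf {..<n} d (\<lambda>_. U))) \<le> (\<Prod>x<n. g x)"
  using dep cond
proof (induction n)
  case 0
  then show ?case by simp
next
  case (Suc n)
  let ?P = "Pi_pmf {..<n} d (\<lambda>_. U)"
  have eq: "Pi_pmf {..<Suc n} d (\<lambda>_. U) = map_pmf (\<lambda>(y,f). f(n:=y)) (pair_pmf U ?P)"
    unfolding lessThan_Suc by (rule Pi_pmf_insert) auto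
  have fx: "f x (H(n:=y)) = f x H" if "x < n" for x H y
    by (rule Suc.prems(1)) (use that in auto)
  have "(\<integral>\<^sup>+H. (\<Prod>x<Suc n. f x H) \<partial>measure_pmf (Pi_pmf {..<Suc n} d (\<lambda>_. U)))
      = (\<integral>\<^sup>+z. (\<Prod>x<Suc n. f x ((snd z)(n:=fst z))) \<partial>measure_pmf (pair_pmf U ?P))"
    unfolding eq by (simp add: case_prod_beta)
  also have "\<dots> = (\<integral>\<^sup>+z. (\<Prod>x<Suc n. f x ((fst z)(n:=snd z))) \<partial>measure_pmf (pair_pmf ?P U))"
    by (subst pair_commute_pmf) (simp add: case_prod_beta)
  also have "\<dots> = (\<integral>\<^sup>+H. \<integral>\<^sup>+y. (\<Prod>x<Suc n. f x (H(n:=y))) \<partial>U \<partial>?P)"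
    by (subst nn_integral_pair_pmf') simp
  also have "\<dots> = (\<integral>\<^sup>+H. (\<Prod>x<n. f x H) * \<integral>\<^sup>+y. f n (H(n:=y)) \<partial>U \<partial>?P)"
  proof (rule nn_integral_cong)
    fix H
    have "(\<Prod>x<Suc n. f x (H(n:=y))) = (\<Prod>x<n. f x H) * f n (H(n:=y))" for y
      by (simp add: fx)
    then show "(\<integral>\<^sup>+y. (\<Prod>x<Suc n. f x (H(n:=y))) \<partial>U) = (\<Prod>x<n. f x H) * \<integral>\<^sup>+y. f n (H(n:=y)) \<partial>U"
      by (simp add: nn_integral_cmult)
  qed
  also have "\<dots> \<le> (\<integral>\<^sup>+H. (\<Prod>x<n. f x H) * g n \<partial>?P)"
    by (intro nn_integral_mono mult_left_mono Suc.prems(2)) auto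
  also have "\<dots> = (\<integral>\<^sup>+H. (\<Prod>x<n. f x H) \<partial>?P) * g n"
    by (simp add: nn_integral_multc)
  also have "\<dots> \<le> (\<Prod>x<n. g x) * g n"
  proof (rule mult_right_mono)
    show "(\<integral>\<^sup>+H. (\<Prod>x<n. f x H) \<partial>?P) \<le> (\<Prod>x<n. g x)"
    proof (rule Suc.IH)
      fix x and H H' :: "nat \<Rightarrow> 'b" assume "x < n" "\<And>y. y \<le> x \<Longrightarrow> H y = H' y"
      then show "f x H = f x H'" using Suc.prems(1)[of x H H'] by simp
    next
      fix x and H :: "nat \<Rightarrow> 'b" assume xn: "x < n"
      show "(\<integral>\<^sup>+v. f x (H(x:=v)) \<partial>measure_pmf U) \<le> g x" by (rule Suc.prems(2)) (use xn in simp)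
    qed
  qed simp
  also have "\<dots> = (\<Prod>x<Suc n. g x)" by simp
  finally show ?case .
qed

lemma chernoff_gen:
  fixes E :: "nat \<Rightarrow> (nat \<Rightarrow> 'b) \<Rightarrow> bool" and p :: "nat \<Rightarrow> real" and z T :: real
  assumes dep: "\<And>x H H'. x < n \<Longrightarrow> (\<And>y. y \<le> x \<Longrightarrow> H y = H' y) \<Longrightarrow> E x H = E x H'"
  and cond: "\<And>x H. x < n \<Longrightarrow> measure_pmf.prob U {v. E x (H(x:=v))} \<le> p x"
  and z: "z \<ge> 1"
  shows "measure_pmf.prob (Pi_pmf {..<n} d (\<lambda>_. U)) {H. T \<le> real (card {x. x<n \<and> E x H})}
          \<le> (\<Prod>x<n. 1 + (z-1) * p x) / z powr T"
proof -
  let ?P = "Pi_pmf {..<n} d (\<lambda>_. U)"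
  define f where "f x H = (if E x H then ennreal z else 1)" for x H
  define A where "A = {H. T \<le> real (card {x. x<n \<and> E x H})}"
  have pnn: "0 \<le> p x" if "x < n" for x
    using cond[OF that, of undefined] measure_nonneg order_trans by blast
  have "(\<integral>\<^sup>+H. (\<Prod>x<n. f x H) \<partial>measure_pmf ?P) \<le> (\<Prod>x<n. ennreal (1 + (z-1) * p x))"
  proof (rule Pi_prod_bound)
    show "f x H = f x H'" if "x < n" "\<And>y. y \<le> x \<Longrightarrow> H y = H' y" for x H H'
      unfolding f_def using dep[OF that] by simp
    fix x H assume xn: "x < n"
    let ?B = "{v. E x (H(x:=v))}"
    have "(\<integral>\<^sup>+v. f x (H(x:=v)) \<partial>measure_pmf U) = (\<integral>\<^sup>+v. 1 + ennreal (z-1) * indicator ?B v \<partial>measure_pmf U)"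
    proof -
      have zz: "1 + ennreal (z-1) = ennreal z" using ennreal_plus[of 1 "z-1"] z by simp
      show ?thesis unfolding f_def using zz
        by (intro nn_integral_cong) (auto simp: indicator_def)
    qed
    also have "\<dots> = 1 + ennreal (z-1) * emeasure U ?B"
      by (subst nn_integral_add) (auto simp: nn_integral_cmult_indicator measure_pmf.emeasure_space_1)
    also have "\<dots> = ennreal (1 + (z-1) * measure_pmf.prob U ?B)"
    proof -
      let ?q = "measure_pmf.prob U ?B"
      have a: "ennreal (z-1) * ennreal ?q = ennreal ((z-1) * ?q)"
        using ennreal_mult[of "z-1" ?q] z measure_nonneg by simp
      have b: "ennreal (1 + (z-1) * ?q) = 1 + ennreal ((z-1) * ?q)"
        using ennreal_plus[of 1 "(z-1) * ?q"] z measure_nonneg by simp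
      show ?thesis by (simp add: measure_pmf.emeasure_eq_measure a b)
    qed
    also have "\<dots> \<le> ennreal (1 + (z-1) * p x)"
      using z cond[OF xn, of H] by (intro ennreal_leI add_left_mono mult_left_mono) auto
    finally show "(\<integral>\<^sup>+v. f x (H(x:=v)) \<partial>measure_pmf U) \<le> ennreal (1 + (z-1) * p x)" .
  qed
  also have "\<dots> = ennreal (\<Prod>x<n. 1 + (z-1) * p x)"
    using z pnn by (subst prod_ennreal) auto
  finally have I: "(\<integral>\<^sup>+H. (\<Prod>x<n. f x H) \<partial>measure_pmf ?P) \<le> ennreal (\<Prod>x<n. 1 + (z-1) * p x)" .
  have pt: "ennreal (z powr T) * indicator A H \<le> (\<Prod>x<n. f x H)" for H
  proof (cases "H \<in> A")
    case True
    have "(\<Prod>x<n. f x H) = (\<Prod>x\<in>{x. x<n \<and> E x H}. ennreal z)"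
      unfolding f_def by (subst prod.inter_filter[symmetric]) (auto intro: prod.cong)
    also have "\<dots> = ennreal z ^ card {x. x<n \<and> E x H}" by simp
    also have "\<dots> = ennreal (z powr real (card {x. x<n \<and> E x H}))"
      using z by (simp add: ennreal_power powr_realpow)
    finally have e: "(\<Prod>x<n. f x H) = ennreal (z powr real (card {x. x<n \<and> E x H}))" .
    have "z powr T \<le> z powr real (card {x. x<n \<and> E x H})"
      using True z unfolding A_def by (intro powr_mono) auto
    then show ?thesis using True e by (simp add: ennreal_leI)
  next
    case False then show ?thesis by simp
  qed
  have "ennreal (z powr T) * emeasure ?P A = (\<integral>\<^sup>+H. ennreal (z powr T) * indicator A H \<partial>measure_pmf ?P)"
    by (simp add: nn_integral_cmult_indicator)
  also have "\<dots> \<le> (\<integral>\<^sup>+H. (\<Prod>x<n. f x H) \<partial>measure_pmf ?P)"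
    by (intro nn_integral_mono pt)
  also have "\<dots> \<le> ennreal (\<Prod>x<n. 1 + (z-1) * p x)" by (rule I)
  finally have "ennreal (z powr T * measure_pmf.prob ?P A) \<le> ennreal (\<Prod>x<n. 1 + (z-1) * p x)"
    using z by (simp add: measure_pmf.emeasure_eq_measure ennreal_mult)
  moreover have "0 \<le> (\<Prod>x<n. 1 + (z-1) * p x)" using z pnn by (intro prod_nonneg) auto
  ultimately have "z powr T * measure_pmf.prob ?P A \<le> (\<Prod>x<n. 1 + (z-1) * p x)"
    by (simp add: ennreal_le_iff)
  then show ?thesis unfolding A_def[symmetric] using z
    by (simp add: field_simps)
qed

lemma card_mod_le:
  fixes A :: "nat set"
  assumes "0 < m" "m dvd D" "A \<subseteq> {..<m}"
  shows "card {y. y < D \<and> y mod m \<in> A} \<le> card A * (D div m)"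
proof -
  have "card {y. y < D \<and> y mod m \<in> A} \<le> card ({..<D div m} \<times> A)"
  proof (rule card_inj_on_le)
    show "inj_on (\<lambda>y. (y div m, y mod m)) {y. y < D \<and> y mod m \<in> A}"
      by (rule inj_onI) (metis div_mult_mod_eq prod.inject)
    show "(\<lambda>y. (y div m, y mod m)) ` {y. y < D \<and> y mod m \<in> A} \<subseteq> {..<D div m} \<times> A"
    proof
      fix w assume "w \<in> (\<lambda>y. (y div m, y mod m)) ` {y. y < D \<and> y mod m \<in> A}"
      then obtain y where y: "y < D" "y mod m \<in> A" and w: "w = (y div m, y mod m)" by auto
      have "y div m < D div m" using y assms by (metis dvd_div_mult_self less_mult_imp_div_less)
      then show "w \<in> {..<D div m} \<times> A" using w y by auto
    qed
    show "finite ({..<D div m} \<times> A)" using assms finite_subset by blast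
  qed
  then show ?thesis by (simp add: card_cartesian_product mult.commute)
qed

lemma prob_both:
  fixes A :: "nat set"
  assumes "0 < m" "m dvd D" "A \<subseteq> {..<m}" "0 < D"
  shows "measure_pmf.prob (pmf_of_set ({..<D} \<times> {..<D})) {v. fst v mod m \<in> A \<and> snd v mod m \<in> A}
          \<le> (real (card A) / real m)^2"
proof -
  let ?S = "{y. y < D \<and> y mod m \<in> A}"
  have eq: "({..<D} \<times> {..<D}) \<inter> {v. fst v mod m \<in> A \<and> snd v mod m \<in> A} = ?S \<times> ?S" by auto
  have c0: "real (card ?S) \<le> real (card A * (D div m))"
    using card_mod_le[OF assms(1-3)] by (simp only: of_nat_le_iff)
  have "real (card A * (D div m)) = real (card A) * (real D / real m)"
    using assms(1,2) by (simp add: real_of_nat_div)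
  then have c: "real (card ?S) \<le> real (card A) * (real D / real m)" using c0 by simp
  have "measure_pmf.prob (pmf_of_set ({..<D} \<times> {..<D})) {v. fst v mod m \<in> A \<and> snd v mod m \<in> A}
      = real (card ?S) ^ 2 / real D ^ 2"
    using assms(4) by (subst measure_pmf_of_set) (auto simp: eq card_cartesian_product power2_eq_square)
  also have "\<dots> \<le> (real (card A) * (real D / real m)) ^ 2 / real D ^ 2"
    using c by (intro divide_right_mono power_mono) auto
  also have "\<dots> = (real (card A) / real m)^2"
    using assms(4) by (simp add: field_simps)
  finally show ?thesis .
qed

lemma Lv_cong: "(\<And>y. y \<le> x \<Longrightarrow> H y = H' y) \<Longrightarrow> Lv M0 tb H x = Lv M0 tb H' x"
proof -
  assume h: "\<And>y. y \<le> x \<Longrightarrow> H y = H' y"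
  have c: "choice M0 tb H x = choice M0 tb H' x" using h by (intro choice_cong) auto
  have l: "load H (choice M0 tb H' x) x m i = load H' (choice M0 tb H' x) x m i" for m i
    using h by (intro load_cong) auto
  show ?thesis unfolding Lv_def c l using h[of x] by simp
qed

lemma mu_cong: "(\<And>y. y < x \<Longrightarrow> H y = H' y) \<Longrightarrow> mu M0 tb H k x = mu M0 tb H' k x"
  unfolding mu_def
  by (rule arg_cong[where f=card], rule Collect_cong) (metis Lv_cong order_le_less_trans)

definition EV where
  "EV M0 tb (\<tau>::nat\<Rightarrow>real) k x H = (Suc k \<le> Lv M0 tb H x \<and> real (mu M0 tb H k x) \<le> \<tau> x)"

lemma EV_cong: "(\<And>y. y \<le> x \<Longrightarrow> H y = H' y) \<Longrightarrow> EV M0 tb \<tau> k x H = EV M0 tb \<tau> k x H'"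
  unfolding EV_def using Lv_cong[of x H H' M0 tb] mu_cong[of x H H' M0 tb k] by auto

lemma EV_prob:
  assumes M0: "0 < M0" and D: "0 < D" "bins M0 x dvd D" and tau: "0 \<le> \<tau> x"
  shows "measure_pmf.prob (pmf_of_set ({..<D} \<times> {..<D})) {v. EV M0 tb \<tau> k x (H(x:=v))}
         \<le> (\<tau> x / real (bins M0 x))^2"
proof (cases "real (mu M0 tb H k x) \<le> \<tau> x")
  case False
  have "mu M0 tb (H(x:=v)) k x = mu M0 tb H k x" for v by (rule mu_cong) auto
  then have e: "{v. EV M0 tb \<tau> k x (H(x:=v))} = {}" using False unfolding EV_def by auto
  show ?thesis unfolding e by simp
next
  case True
  let ?m = "bins M0 x"
  let ?c = "choice M0 tb H x"
  define A where "A = {i. i < ?m \<and> Suc k \<le> load H ?c x ?m i}"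
  have mpos: "0 < ?m" using bins_pos[OF M0] .
  have cA: "card A \<le> mu M0 tb H k x"
    unfolding A_def by (rule corB[OF M0]) (auto intro: bins_dvd[OF M0])
  have sub: "{v. EV M0 tb \<tau> k x (H(x:=v))} \<subseteq> {v. fst v mod ?m \<in> A \<and> snd v mod ?m \<in> A}"
  proof
    fix v assume "v \<in> {v. EV M0 tb \<tau> k x (H(x:=v))}"
    then have L: "Suc k \<le> Lv M0 tb (H(x:=v)) x" unfolding EV_def by auto
    have c: "choice M0 tb (H(x:=v)) x = ?c" by (rule choice_cong) auto
    have l: "load (H(x:=v)) ?c x ?m i = load H ?c x ?m i" for i by (rule load_cong) auto
    have "Suc k \<le> min (load H ?c x ?m (fst v mod ?m)) (load H ?c x ?m (snd v mod ?m))"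
      using L unfolding Lv_def c l by simp
    then show "v \<in> {v. fst v mod ?m \<in> A \<and> snd v mod ?m \<in> A}"
      unfolding A_def using mpos by auto
  qed
  have "measure_pmf.prob (pmf_of_set ({..<D} \<times> {..<D})) {v. EV M0 tb \<tau> k x (H(x:=v))}
      \<le> measure_pmf.prob (pmf_of_set ({..<D} \<times> {..<D})) {v. fst v mod ?m \<in> A \<and> snd v mod ?m \<in> A}"
    by (rule measure_pmf.finite_measure_mono[OF sub]) auto
  also have "\<dots> \<le> (real (card A) / real ?m)^2"
    by (rule prob_both[OF mpos D(2) _ D(1)]) (auto simp: A_def)
  also have "\<dots> \<le> (\<tau> x / real ?m)^2"
    using cA True mpos by (intro power_mono divide_right_mono) auto
  finally show ?thesis .
qed

lemma inv_sq_sum_aux: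
  fixes M :: nat assumes "1 \<le> M"
  shows "(\<Sum>x<s. 1 / real (max M x)^2) \<le> real (min s M) / real M^2 + 2 / real M - 2 / real (max M s)"
proof (induction s)
  case 0 then show ?case using assms by simp
next
  case (Suc s)
  show ?case
  proof (cases "Suc s \<le> M")
    case True
    then have "max M s = M" "max M (Suc s) = M" "min s M = s" "min (Suc s) M = Suc s" by auto
    then show ?thesis using Suc.IH by (simp add: add_divide_distrib)
  next
    case False
    then have ms: "max M s = s" "max M (Suc s) = Suc s" "min (Suc s) M = M" "min s M = M" "M \<le> s" by auto
    have s1: "1 \<le> real s" using ms assms by simp
    have e: "2 / real s - 2 / real (Suc s) = 2 / (real s * (real s + 1))"
      using s1 by (simp add: field_simps)
    have q: "real s * 1 \<le> real s * real s" by (rule mult_left_mono) (use s1 in auto)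
    have w: "real s * (real s + 1) \<le> 2 * real s^2" using q by (simp add: power2_eq_square algebra_simps)
    have "1 / real s ^ 2 = 2 / (2 * real s^2)" by simp
    also have "\<dots> \<le> 2 / (real s * (real s + 1))"
      by (rule frac_le) (use s1 w in auto)
    finally have "1 / real s ^ 2 \<le> 2 / real s - 2 / real (Suc s)" using e by simp
    then show ?thesis using Suc.IH ms by simp
  qed
qed

lemma inv_sq_sum:
  fixes M :: nat assumes "1 \<le> M"
  shows "(\<Sum>x<s. 1 / real (max M x)^2) \<le> 3 / real M"
proof -
  have "real (min s M) / real M^2 \<le> 1 / real M"
    using assms by (simp add: field_simps power2_eq_square)
  moreover have "0 \<le> 2 / real (max M s)" by simp
  ultimately show ?thesis using inv_sq_sum_aux[OF assms, of s] by linarith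
qed

lemma inv_sq_mono: fixes a b :: real assumes "0 < a" "a \<le> b" shows "1 / b^2 \<le> 1 / a^2"
  by (rule frac_le) (use assms in \<open>auto intro: power_mono\<close>)

lemma bins_inv_sq_sum:
  assumes "0 < M0"
  shows "(\<Sum>x<s. 1 / real (bins M0 x)^2) \<le> 3 / real M0"
proof -
  have "(\<Sum>x<s. 1 / real (bins M0 x)^2) \<le> (\<Sum>x<s. 1 / real (max M0 x)^2)"
  proof (rule sum_mono)
    fix x
    have "max M0 x \<le> bins M0 x" using bins_ge[OF assms] bins_ge4[OF assms, of x] by simp
    moreover have "0 < max M0 x" using assms by simp
    ultimately show "1 / real (bins M0 x)^2 \<le> 1 / real (max M0 x)^2"
      by (intro inv_sq_mono) auto
  qed
  also have "\<dots> \<le> 3 / real M0" using assms by (intro inv_sq_sum) auto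
  finally show ?thesis .
qed

lemma max_sq_le: fixes u v m :: real assumes "0 \<le> u" "0 \<le> v" "0 < m"
  shows "(max (u * m) v / m)^2 \<le> u^2 + v^2 / m^2"
proof (cases "u * m \<le> v")
  case True then show ?thesis using assms by (simp add: power_divide)
next
  case False then show ?thesis using assms by (simp add: power_divide)
qed

definition bb :: "nat \<Rightarrow> real" where "bb k = (1/4) ^ (2^k)"
definition tau :: "nat \<Rightarrow> real \<Rightarrow> nat \<Rightarrow> nat \<Rightarrow> real" where
  "tau M0 R k x = max (bb k * real (bins M0 x)) R"

lemma bb_Suc: "bb (Suc k) = (bb k)^2"
  unfolding bb_def by (simp add: power_mult[symmetric] mult.commute)

lemma bb_nonneg: "0 \<le> bb k" unfolding bb_def by simp

lemma tau_nonneg: "0 \<le> R \<Longrightarrow> 0 \<le> tau M0 R k x" unfolding tau_def by simp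

lemma good_levels:
  assumes M0: "0 < M0" and R: "0 \<le> R"
  and notB: "\<And>k s. k < k0 \<Longrightarrow> s < N \<Longrightarrow>
     real (card {x. x < N \<and> (x < s \<and> EV M0 tb (tau M0 R k) k x H)}) < tau M0 R (Suc k) s"
  shows "k \<le> k0 \<Longrightarrow> s < N \<Longrightarrow> real (mu M0 tb H k s) \<le> tau M0 R k s"
proof (induction k arbitrary: s)
  case 0
  have "mu M0 tb H 0 s = s" unfolding mu_def by simp
  moreover have "4 * s \<le> bins M0 s" by (rule bins_ge4[OF M0])
  then have "real s \<le> bb 0 * real (bins M0 s)" unfolding bb_def by simp
  ultimately show ?case unfolding tau_def by simp
next
  case (Suc k)
  have eq: "{x. x < s \<and> Suc k \<le> Lv M0 tb H x} = {x. x < N \<and> (x < s \<and> EV M0 tb (tau M0 R k) k x H)}"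
  proof -
    have "real (mu M0 tb H k x) \<le> tau M0 R k x" if "x < s" for x
      using Suc.IH[of x] Suc.prems that by auto
    then show ?thesis unfolding EV_def using Suc.prems by auto
  qed
  show ?case unfolding mu_def eq using notB[of k s] Suc.prems by simp
qed

lemma exp_div_2powr: fixes T :: real assumes "0 \<le> T" "3 * T / 8 \<ge> S"
  shows "exp S / 2 powr T \<le> exp (- T / 8)"
proof -
  have l2: "1/2 \<le> ln (2::real)" using ln2_ge_two_thirds by simp
  have "2 powr T = exp (T * ln 2)" by (simp add: powr_def mult.commute)
  then have "exp S / 2 powr T = exp (S - T * ln 2)" by (simp add: exp_diff)
  also have "\<dots> \<le> exp (- T / 8)"
  proof -
    have "T * (1/2) \<le> T * ln 2" using assms(1) l2 by (intro mult_left_mono) auto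
    then show ?thesis using assms(2) by simp
  qed
  finally show ?thesis .
qed

lemma sum_p_bound:
  assumes M0: "0 < M0" and R: "0 \<le> R"
  shows "(\<Sum>x<s. (tau M0 R k x / real (bins M0 x))^2) \<le> real s * (bb k)^2 + 3 * R^2 / real M0"
proof -
  have "(\<Sum>x<s. (tau M0 R k x / real (bins M0 x))^2) \<le> (\<Sum>x<s. (bb k)^2 + R^2 * (1 / real (bins M0 x)^2))"
  proof (rule sum_mono)
    fix x
    have "(tau M0 R k x / real (bins M0 x))^2 \<le> (bb k)^2 + R^2 / real (bins M0 x)^2"
      unfolding tau_def using bins_pos[OF M0, of x] by (intro max_sq_le bb_nonneg R) auto
    then show "(tau M0 R k x / real (bins M0 x))^2 \<le> (bb k)^2 + R^2 * (1 / real (bins M0 x)^2)" by simp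
  qed
  also have "\<dots> = real s * (bb k)^2 + R^2 * (\<Sum>x<s. 1 / real (bins M0 x)^2)"
    by (simp add: sum.distrib sum_distrib_left)
  also have "\<dots> \<le> real s * (bb k)^2 + R^2 * (3 / real M0)"
    by (intro add_left_mono mult_left_mono bins_inv_sq_sum M0) auto
  also have "\<dots> = real s * (bb k)^2 + 3 * R^2 / real M0" by simp
  finally show ?thesis .
qed

lemma probB:
  assumes M0: "0 < M0" and D: "0 < D" and dv: "\<forall>s\<le>N. bins M0 s dvd D"
    and R: "0 \<le> R" and RM: "24 * R \<le> real M0" and sN: "s < N"
  shows "measure_pmf.prob (hash_pmf N D)
     {H. tau M0 R (Suc k) s \<le> real (card {x. x < N \<and> (x < s \<and> EV M0 tb (tau M0 R k) k x H)})}
     \<le> exp (- R / 8)"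
proof -
  define p where "p x = (if x < s then (tau M0 R k x / real (bins M0 x))^2 else 0)" for x
  define T where "T = tau M0 R (Suc k) s"
  have pnn: "0 \<le> p x" for x unfolding p_def by simp
  have ch: "measure_pmf.prob (Pi_pmf {..<N} (0,0) (\<lambda>_. pmf_of_set ({..<D} \<times> {..<D})))
     {H. T \<le> real (card {x. x < N \<and> (x < s \<and> EV M0 tb (tau M0 R k) k x H)})}
     \<le> (\<Prod>x<N. 1 + (2-1) * p x) / 2 powr T"
  proof (rule chernoff_gen)
    show "(x < s \<and> EV M0 tb (tau M0 R k) k x H) = (x < s \<and> EV M0 tb (tau M0 R k) k x H')"
      if "x < N" "\<And>y. y \<le> x \<Longrightarrow> H y = H' y" for x H H'
      using EV_cong[of x H H'] that by auto
    fix x H assume xN: "x < N"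
    show "measure_pmf.prob (pmf_of_set ({..<D} \<times> {..<D})) {v. x < s \<and> EV M0 tb (tau M0 R k) k x (H(x := v))} \<le> p x"
    proof (cases "x < s")
      case True
      have dvx: "bins M0 x dvd D" using dv xN by auto
      have tn: "0 \<le> tau M0 R k x" by (rule tau_nonneg[OF R])
      show ?thesis using True EV_prob[where \<tau>="tau M0 R k", OF M0 D dvx tn, where tb=tb and k=k and H=H] unfolding p_def by simp
    next
      case False
      then show ?thesis unfolding p_def by simp
    qed
  qed simp
  have "(\<Prod>x<N. 1 + (2-1) * p x) = (\<Prod>x<N. 1 + p x)" by simp
  also have "\<dots> \<le> exp (\<Sum>x<N. p x)" by (rule prod_le_exp_sum) (simp add: pnn)
  also have "(\<Sum>x<N. p x) = (\<Sum>x<s. (tau M0 R k x / real (bins M0 x))^2)"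
  proof -
    have "(\<Sum>x<N. p x) = (\<Sum>x\<in>{..<N} \<inter> {x. x < s}. (tau M0 R k x / real (bins M0 x))^2) + (\<Sum>x\<in>{..<N} \<inter> - {x. x < s}. 0)"
      unfolding p_def by (rule sum.If_cases) simp
    also have "{..<N} \<inter> {x. x < s} = {..<s}" using sN by auto
    finally show ?thesis by simp
  qed
  finally have P1: "(\<Prod>x<N. 1 + (2-1) * p x) \<le> exp (\<Sum>x<s. (tau M0 R k x / real (bins M0 x))^2)" .
  have Tge: "R \<le> T" "bb (Suc k) * real (bins M0 s) \<le> T" unfolding T_def tau_def by auto
  have S: "(\<Sum>x<s. (tau M0 R k x / real (bins M0 x))^2) \<le> 3 * T / 8"
  proof -
    have a: "real s * (bb k)^2 \<le> T / 4"
    proof -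
      have "4 * real s \<le> real (bins M0 s)" using bins_ge4[OF M0, of s] by linarith
      then have "(4 * real s) * (bb k)^2 \<le> real (bins M0 s) * (bb k)^2"
        by (rule mult_right_mono) simp
      then have "4 * (real s * (bb k)^2) \<le> real (bins M0 s) * (bb k)^2"
        by (simp add: mult.assoc)
      also have "\<dots> = bb (Suc k) * real (bins M0 s)" by (simp add: bb_Suc)
      finally show ?thesis using Tge by simp
    qed
    have b: "3 * R^2 / real M0 \<le> T / 8"
    proof -
      have "3 * R^2 * 8 \<le> R * real M0" using RM R
        by (simp add: power2_eq_square) (metis mult.assoc mult.commute mult_left_mono)
      then have "3 * R^2 / real M0 \<le> R / 8" using M0 by (simp add: field_simps)
      then show ?thesis using Tge by simp
    qed
    show ?thesis using sum_p_bound[OF M0 R, where s=s and k=k] a b by linarith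
  qed
  have T0: "0 \<le> T" using Tge R by simp
  have "measure_pmf.prob (hash_pmf N D)
     {H. T \<le> real (card {x. x < N \<and> (x < s \<and> EV M0 tb (tau M0 R k) k x H)})}
     \<le> exp (\<Sum>x<s. (tau M0 R k x / real (bins M0 x))^2) / 2 powr T"
    using ch P1 unfolding hash_pmf_def by (meson divide_right_mono order_trans powr_ge_zero)
  also have "\<dots> \<le> exp (- T / 8)" by (rule exp_div_2powr[OF T0 S])
  also have "\<dots> \<le> exp (- R / 8)" using Tge by simp
  finally show ?thesis unfolding T_def .
qed

lemma probF:
  assumes M0: "0 < M0" and D: "0 < D" and dv: "\<forall>s\<le>N. bins M0 s dvd D"
    and R: "0 \<le> R" and N: "0 < N" and bk0: "bb k0 \<le> 1 / real N"
    and q: "q = 1 / real N + 3 * R^2 / real M0" and q1: "q \<le> 1"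
  shows "measure_pmf.prob (hash_pmf N D)
     {H. real r \<le> real (card {x. x < N \<and> EV M0 tb (tau M0 R k0) k0 x H})}
     \<le> exp 1 * q ^ r"
proof -
  define p where "p x = (tau M0 R k0 x / real (bins M0 x))^2" for x
  define z where "z = 1 / q"
  have q0: "0 < q" unfolding q using N M0 by (intro add_pos_nonneg) auto
  have z1: "1 \<le> z" unfolding z_def using q0 q1 by simp
  have pnn: "0 \<le> p x" for x unfolding p_def by simp
  have ch: "measure_pmf.prob (Pi_pmf {..<N} (0,0) (\<lambda>_. pmf_of_set ({..<D} \<times> {..<D})))
     {H. real r \<le> real (card {x. x < N \<and> EV M0 tb (tau M0 R k0) k0 x H})}
     \<le> (\<Prod>x<N. 1 + (z-1) * p x) / z powr real r"
  proof (rule chernoff_gen)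
    show "EV M0 tb (tau M0 R k0) k0 x H = EV M0 tb (tau M0 R k0) k0 x H'"
      if "x < N" "\<And>y. y \<le> x \<Longrightarrow> H y = H' y" for x H H'
      using EV_cong[of x H H'] that by auto
    fix x H assume xN: "x < N"
    have dvx: "bins M0 x dvd D" using dv xN by auto
    have tn: "0 \<le> tau M0 R k0 x" by (rule tau_nonneg[OF R])
    show "measure_pmf.prob (pmf_of_set ({..<D} \<times> {..<D})) {v. EV M0 tb (tau M0 R k0) k0 x (H(x := v))} \<le> p x"
      using EV_prob[where \<tau>="tau M0 R k0", OF M0 D dvx tn, where tb=tb and k=k0 and H=H] unfolding p_def by simp
  qed (rule z1)
  have "(\<Prod>x<N. 1 + (z-1) * p x) \<le> exp (\<Sum>x<N. (z-1) * p x)"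
    by (rule prod_le_exp_sum) (use z1 pnn in simp)
  also have "(\<Sum>x<N. (z-1) * p x) = (z-1) * (\<Sum>x<N. p x)" by (simp add: sum_distrib_left)
  also have "\<dots> \<le> z * q"
  proof -
    have "(\<Sum>x<N. p x) \<le> real N * (bb k0)^2 + 3 * R^2 / real M0"
      unfolding p_def by (rule sum_p_bound[OF M0 R])
    also have "real N * (bb k0)^2 \<le> 1 / real N"
    proof -
      have "(bb k0)^2 \<le> (1 / real N)^2" by (rule power_mono[OF bk0 bb_nonneg])
      then have "real N * (bb k0)^2 \<le> real N * (1 / real N)^2" by (rule mult_left_mono) simp
      also have "\<dots> = 1 / real N" using N by (simp add: power2_eq_square)
      finally show ?thesis .
    qed
    finally have "(\<Sum>x<N. p x) \<le> q" unfolding q by simp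
    moreover have "0 \<le> (\<Sum>x<N. p x)" by (simp add: sum_nonneg pnn)
    ultimately have "(z-1) * (\<Sum>x<N. p x) \<le> (z-1) * q" using z1 by (intro mult_left_mono) auto
    also have "\<dots> \<le> z * q" using q0 by (simp add: algebra_simps)
    finally show ?thesis .
  qed
  also have "z * q = 1" unfolding z_def using q0 by simp
  finally have P: "(\<Prod>x<N. 1 + (z-1) * p x) \<le> exp 1" by simp
  have zr: "z powr real r = 1 / q ^ r" unfolding z_def using q0
    by (simp add: powr_realpow power_one_over)
  have "measure_pmf.prob (hash_pmf N D)
     {H. real r \<le> real (card {x. x < N \<and> EV M0 tb (tau M0 R k0) k0 x H})}
     \<le> exp 1 / z powr real r"
    using ch P z1 unfolding hash_pmf_def by (meson divide_right_mono order_trans powr_ge_zero)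
  also have "\<dots> = exp 1 * q ^ r" unfolding zr by simp
  finally show ?thesis .
qed

lemma max_load_witness:
  assumes M0: "0 < M0" and K: "K < max_load M0 tb H t"
  shows "\<exists>y<t. K \<le> Lv M0 tb H y"
proof -
  let ?m = "bins M0 t"
  let ?I = "(\<lambda>i. load H (choice M0 tb H t) t ?m i) ` {..<?m}"
  have "?I \<noteq> {}" using bins_pos[OF M0, of t] by auto
  then have "Max ?I \<in> ?I" by (intro Max_in) auto
  then obtain i where i: "i < ?m" "load H (choice M0 tb H t) t ?m i = max_load M0 tb H t"
    unfolding max_load_def by auto
  then have "Suc K \<le> load H (choice M0 tb H t) t ?m i" using K by simp
  from lemmaA[OF M0 _ this] obtain y where "y < t" "K \<le> Lv M0 tb H y"
    using bins_dvd[OF M0] by (meson less_imp_le)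
  then show ?thesis by auto
qed

lemma bad_subset:
  assumes M0: "0 < M0" and R: "0 \<le> R" and tN: "t \<le> N" and r: "1 \<le> r"
  shows "{H. real (k0 + r) < real (max_load M0 tb H t)} \<subseteq>
     (\<Union>ks\<in>{..<k0} \<times> {..<N}. {H. tau M0 R (Suc (fst ks)) (snd ks) \<le>
          real (card {x. x < N \<and> (x < snd ks \<and> EV M0 tb (tau M0 R (fst ks)) (fst ks) x H)})})
     \<union> {H. real r \<le> real (card {x. x < N \<and> EV M0 tb (tau M0 R k0) k0 x H})}"
proof
  fix H assume "H \<in> {H. real (k0 + r) < real (max_load M0 tb H t)}"
  then have K: "k0 + r < max_load M0 tb H t" by simp
  show "H \<in> (\<Union>ks\<in>{..<k0} \<times> {..<N}. {H. tau M0 R (Suc (fst ks)) (snd ks) \<le>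
          real (card {x. x < N \<and> (x < snd ks \<and> EV M0 tb (tau M0 R (fst ks)) (fst ks) x H)})})
     \<union> {H. real r \<le> real (card {x. x < N \<and> EV M0 tb (tau M0 R k0) k0 x H})}"
  proof (rule ccontr)
    assume nb: "\<not> ?thesis"
    have notB: "real (card {x. x < N \<and> (x < s \<and> EV M0 tb (tau M0 R k) k x H)}) < tau M0 R (Suc k) s"
      if "k < k0" "s < N" for k s
      using nb that by force
    have good: "real (mu M0 tb H k0 x) \<le> tau M0 R k0 x" if "x < N" for x
      by (rule good_levels[OF M0 R notB]) (use that in auto)
    obtain y where y: "y < t" "k0 + r \<le> Lv M0 tb H y" using max_load_witness[OF M0 K] by auto
    obtain j where j: "r = Suc j" using r by (cases r) auto
    have "Suc j \<le> mu M0 tb H (Suc k0) t" by (rule chain[OF M0 y(1)]) (use y(2) j in simp)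
    also have "mu M0 tb H (Suc k0) t \<le> card {x. x < N \<and> EV M0 tb (tau M0 R k0) k0 x H}"
      unfolding mu_def
    proof (rule card_mono)
      show "{x. x < t \<and> Suc k0 \<le> Lv M0 tb H x} \<subseteq> {x. x < N \<and> EV M0 tb (tau M0 R k0) k0 x H}"
        using good tN unfolding EV_def by auto
    qed simp
    finally have "real r \<le> real (card {x. x < N \<and> EV M0 tb (tau M0 R k0) k0 x H})" using j by simp
    then show False using nb by auto
  qed
qed

lemma core:
  assumes M0: "0 < M0" and D: "0 < D" and dv: "\<forall>s\<le>N. bins M0 s dvd D" and tN: "t \<le> N"
    and R: "0 \<le> R" and RM: "24 * R \<le> real M0" and N: "0 < N" and bk0: "bb k0 \<le> 1 / real N"
    and q: "q = 1 / real N + 3 * R^2 / real M0" and q1: "q \<le> 1" and r: "1 \<le> r"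
  shows "measure_pmf.prob (hash_pmf N D) {H. real (k0 + r) < real (max_load M0 tb H t)}
     \<le> real k0 * real N * exp (- R / 8) + exp 1 * q ^ r"
proof -
  let ?P = "measure_pmf.prob (hash_pmf N D)"
  let ?B = "\<lambda>ks. {H. tau M0 R (Suc (fst ks)) (snd ks) \<le>
          real (card {x. x < N \<and> (x < snd ks \<and> EV M0 tb (tau M0 R (fst ks)) (fst ks) x H)})}"
  let ?F = "{H. real r \<le> real (card {x. x < N \<and> EV M0 tb (tau M0 R k0) k0 x H})}"
  have "?P {H. real (k0 + r) < real (max_load M0 tb H t)} \<le> ?P ((\<Union>ks\<in>{..<k0} \<times> {..<N}. ?B ks) \<union> ?F)"
    by (rule measure_pmf.finite_measure_mono[OF bad_subset[OF M0 R tN r]]) simp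
  also have "\<dots> \<le> ?P (\<Union>ks\<in>{..<k0} \<times> {..<N}. ?B ks) + ?P ?F"
    by (rule measure_Un_le) auto
  also have "?P (\<Union>ks\<in>{..<k0} \<times> {..<N}. ?B ks) \<le> (\<Sum>ks\<in>{..<k0} \<times> {..<N}. ?P (?B ks))"
    by (rule measure_pmf.finite_measure_subadditive_finite) auto
  also have "\<dots> \<le> (\<Sum>ks\<in>{..<k0} \<times> {..<N}. exp (- R / 8))"
  proof (rule sum_mono)
    fix ks assume "ks \<in> {..<k0} \<times> {..<N}"
    then show "?P (?B ks) \<le> exp (- R / 8)"
      by (intro probB[OF M0 D dv R RM]) auto
  qed
  also have "\<dots> = real k0 * real N * exp (- R / 8)" by (simp add: card_cartesian_product)
  also have "?P ?F \<le> exp 1 * q ^ r" by (rule probF[OF M0 D dv R N bk0 q q1])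
  finally show ?thesis by simp
qed

lemma ev_log: fixes e K :: real assumes "e > 0"
  shows "eventually (\<lambda>N::nat. K * ln (real N) \<le> real N powr e) sequentially"
  using assms by real_asymp

lemma ev_log2: fixes e K :: real assumes "e > 0"
  shows "eventually (\<lambda>N::nat. K * (ln (real N))^2 \<le> real N powr e) sequentially"
  using assms by real_asymp

lemma ev_k0: "eventually (\<lambda>N::nat. log 2 (ln (real N)) + 1 \<le> real N) sequentially"
  by real_asymp

lemma ev_lnln: fixes r :: real shows "eventually (\<lambda>N::nat. r \<le> ln (ln (real N))) sequentially"
  by real_asymp

lemma bb_k0:
  fixes N :: nat assumes L: "1 \<le> ln (real N)" and N: "0 < N"
  shows "bb (nat \<lceil>log 2 (ln (real N))\<rceil>) \<le> 1 / real N"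
proof -
  define k0 where "k0 = nat \<lceil>log 2 (ln (real N))\<rceil>"
  have lg: "log 2 (ln (real N)) \<le> real k0" unfolding k0_def by linarith
  have "ln (real N) = 2 powr (log 2 (ln (real N)))" using L by simp
  also have "\<dots> \<le> 2 powr (real k0)" using lg by (intro powr_mono) auto
  also have "\<dots> = real (2 ^ k0)" by (simp add: powr_realpow)
  finally have n: "ln (real N) \<le> real (2 ^ k0)" .
  have "bb k0 = (1/4) ^ (2 ^ k0)" unfolding bb_def ..
  also have "\<dots> \<le> (exp (-1)) ^ (2 ^ k0)"
  proof (rule power_mono)
    have "exp 1 \<le> (4::real)" using exp_le by simp
    then show "(1/4::real) \<le> exp (-1)" by (simp add: exp_minus field_simps)
  qed simp
  also have "\<dots> = exp (real (2 ^ k0) * (-1))" by (rule exp_of_nat_mult[symmetric])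
  also have "\<dots> \<le> exp (- ln (real N))" using n by simp
  also have "\<dots> = 1 / real N" using N by (simp add: exp_minus inverse_eq_divide)
  finally show ?thesis unfolding k0_def .
qed

lemma k0_le:
  fixes x :: real assumes "0 \<le> x" shows "real (nat \<lceil>x\<rceil>) \<le> x + 1"
  using assms by linarith

lemma main_bound:
  fixes a c :: real and M0 N D t :: nat and tb
  assumes a: "a > 0" and c: "c > 0"
  and N16: "16 \<le> N"
  and e1: "24 * (8 * (c + 3) * ln (real N)) \<le> real N powr (1/a)"
  and e2: "6 * (8 * (c + 3) * ln (real N))^2 \<le> real N powr (1/a - 1/(2*a+2))"
  and e3: "log 2 (ln (real N)) + 1 \<le> real N"
  and e4: "real (nat \<lceil>(c+1)*(2*a+2)\<rceil> + 1) + 1 \<le> ln (ln (real N))"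
  and M0: "0 < M0" and NM: "real N \<le> real M0 powr a"
  and D: "0 < D" and dv: "\<forall>s\<le>N. bins M0 s dvd D" and tN: "t \<le> N"
  shows "measure_pmf.prob (hash_pmf N D)
      {H. real (max_load M0 tb H t) > 3 * ln (ln (real N))} \<le> 1 / real N powr c"
proof -
  define L where "L = ln (real N)"
  define R where "R = 8 * (c + 3) * L"
  define k0 where "k0 = nat \<lceil>log 2 L\<rceil>"
  define r where "r = nat \<lceil>(c+1)*(2*a+2)\<rceil> + 1"
  define nu where "nu = 1/(2*a+2)"
  define q where "q = 1 / real N + 3 * R^2 / real M0"
  have N0: "0 < N" using N16 by simp
  have Nr: "16 \<le> real N" using N16 by simp
  have L1: "1 \<le> L"
  proof -
    have "exp 1 \<le> real N" using exp_le Nr by simp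
    then show ?thesis unfolding L_def using N0 by (simp add: ln_ge_iff)
  qed
  have R0: "0 \<le> R" unfolding R_def using L1 c by simp
  have M0ge: "real N powr (1/a) \<le> real M0"
  proof -
    have "real N powr (1/a) \<le> (real M0 powr a) powr (1/a)" using NM a by (intro powr_mono2) auto
    also have "\<dots> = real M0" using a M0 by (simp add: powr_powr)
    finally show ?thesis .
  qed
  have Npos: "0 < real N powr (1/a)" using N0 by simp
  have RM: "24 * R \<le> real M0" using e1 M0ge unfolding R_def L_def by linarith
  have bk0: "bb k0 \<le> 1 / real N" unfolding k0_def L_def by (rule bb_k0) (use L1 N0 in \<open>auto simp: L_def\<close>)
  have r1: "1 \<le> r" unfolding r_def by simp
  have nu12: "nu \<le> 1/2" unfolding nu_def using a by (simp add: field_simps)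
  have nu0: "0 < nu" unfolding nu_def using a by simp
  have qb: "q \<le> real N powr (- nu)"
  proof -
    have "3 * R^2 / real M0 \<le> 3 * R^2 / real N powr (1/a)"
      using M0ge Npos M0 by (intro divide_left_mono mult_pos_pos) auto
    also have "\<dots> \<le> real N powr (- nu) / 2"
    proof -
      have "6 * R^2 \<le> real N powr (1/a - nu)" using e2 unfolding R_def L_def nu_def .
      also have "\<dots> = real N powr (1/a) * real N powr (- nu)"
        by (simp add: powr_add[symmetric])
      finally show ?thesis using Npos by (simp add: field_simps)
    qed
    finally have A: "3 * R^2 / real M0 \<le> real N powr (- nu) / 2" .
    have B: "1 / real N \<le> real N powr (- nu) / 2"
    proof -
      have "(4::real) = 16 powr (1/2)"
        by (simp add: powr_half_sqrt)
      also have "\<dots> \<le> real N powr (1/2)" using Nr by (intro powr_mono2) auto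
      also have "\<dots> \<le> real N powr (1 - nu)" using nu12 Nr by (intro powr_mono) auto
      also have "\<dots> = real N * real N powr (- nu)" using N0 by (subst powr_diff) (simp add: powr_minus_divide)
      finally have "4 \<le> real N * real N powr (- nu)" .
      then show ?thesis using N0 by (simp add: field_simps)
    qed
    show ?thesis unfolding q_def using A B by simp
  qed
  have q0: "0 \<le> q" unfolding q_def by simp
  have q1: "q \<le> 1"
  proof -
    have "real N powr (- nu) \<le> real N powr 0" using nu0 Nr by (intro powr_mono) auto
    then show ?thesis using qb N0 by simp
  qed
  have qr: "q ^ r \<le> real N powr (- (c+1))"
  proof -
    have "q ^ r \<le> (real N powr (- nu)) ^ r" by (rule power_mono[OF qb q0])
    also have "\<dots> = real N powr (real r * (- nu))" using N0 by (simp add: powr_power)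
    also have "\<dots> \<le> real N powr (- (c+1))"
    proof (rule powr_mono)
      have "(c+1)*(2*a+2) \<le> real r" unfolding r_def by linarith
      then have "(c+1) \<le> real r * nu" unfolding nu_def using a by (simp add: field_simps)
      then show "real r * - nu \<le> - (c + 1)" by simp
    qed (use Nr in simp)
    finally show ?thesis .
  qed
  have k0N: "real k0 \<le> real N"
  proof -
    have "0 \<le> log 2 L" using L1 by simp
    then have "real k0 \<le> log 2 L + 1" unfolding k0_def by (rule k0_le)
    then show ?thesis using e3 unfolding L_def by simp
  qed
  have ex: "exp (- R / 8) = real N powr (- (c+3))"
  proof -
    have "R = 8 * ((c+3)*L)" by (simp add: R_def mult.assoc)
    then have "- R / 8 = - ((c+3) * L)" by simp
    then show ?thesis unfolding L_def using N0 by (simp add: powr_def algebra_simps)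
  qed
  have core': "measure_pmf.prob (hash_pmf N D) {H. real (k0 + r) < real (max_load M0 tb H t)}
     \<le> real k0 * real N * exp (- R / 8) + exp 1 * q ^ r"
    by (rule core[OF M0 D dv tN R0 RM N0 bk0 q_def q1 r1])
  have t1: "real k0 * real N * exp (- R / 8) \<le> real N powr (- (c+1))"
  proof -
    have "real k0 * real N * exp (- R / 8) \<le> real N * real N * real N powr (- (c+3))"
      unfolding ex by (intro mult_right_mono k0N) auto
    also have "\<dots> = real N powr (- (c+1))"
    proof -
      have "real N * real N * real N powr (- (c+3)) = real N powr 1 * real N powr 1 * real N powr (- (c+3))"
        using N0 by simp
      also have "\<dots> = real N powr (1 + 1 + - (c+3))" by (simp only: powr_add)
      also have "(1::real) + 1 + - (c+3) = - (c+1)" by simp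
      finally show ?thesis .
    qed
    finally show ?thesis .
  qed
  have t2: "exp 1 * q ^ r \<le> 3 * real N powr (- (c+1))"
  proof -
    have "exp 1 * q ^ r \<le> 3 * q ^ r" using exp_le q0 by (intro mult_right_mono) auto
    also have "\<dots> \<le> 3 * real N powr (- (c+1))" using qr by simp
    finally show ?thesis .
  qed
  have fin: "4 * real N powr (- (c+1)) \<le> 1 / real N powr c"
  proof -
    have e: "- (c+1) = - c - 1" by simp
    have "real N powr (- (c+1)) = real N powr (- c - 1)" by (simp only: e)
    also have "\<dots> = real N powr (- c) / real N powr 1" by (rule powr_diff)
    also have "\<dots> = real N powr (- c) / real N" using N0 by simp
    finally have "real N powr (- (c+1)) = real N powr (- c) / real N" .
    then have "4 * real N powr (- (c+1)) = (4 / real N) * real N powr (- c)" by simp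
    also have "\<dots> \<le> 1 * real N powr (- c)" using Nr by (intro mult_right_mono) auto
    also have "\<dots> = 1 / real N powr c" by (simp add: powr_minus_divide)
    finally show ?thesis .
  qed
  have sub: "{H. real (max_load M0 tb H t) > 3 * ln (ln (real N))} \<subseteq> {H. real (k0 + r) < real (max_load M0 tb H t)}"
  proof -
    have "real (k0 + r) \<le> 3 * ln L"
    proof -
      have lL: "0 \<le> ln L" using L1 by simp
      have "real k0 \<le> log 2 L + 1" unfolding k0_def using L1 by (intro k0_le) simp
      also have "log 2 L = ln L / ln 2" by (simp add: log_def)
      also have "\<dots> \<le> ln L / (2/3)" using ln2_ge_two_thirds lL by (intro divide_left_mono) auto
      finally have "real k0 \<le> 3/2 * ln L + 1" by simp
      moreover have "real r + 1 \<le> ln L" using e4 unfolding r_def L_def by simp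
      ultimately show ?thesis using lL by simp
    qed
    then show ?thesis unfolding L_def by auto
  qed
  have "measure_pmf.prob (hash_pmf N D) {H. real (max_load M0 tb H t) > 3 * ln (ln (real N))}
     \<le> measure_pmf.prob (hash_pmf N D) {H. real (k0 + r) < real (max_load M0 tb H t)}"
    by (rule measure_pmf.finite_measure_mono[OF sub]) simp
  also have "\<dots> \<le> 4 * real N powr (- (c+1))" using core' t1 t2 by simp
  also have "\<dots> \<le> 1 / real N powr c" by (rule fin)
  finally show ?thesis .
qed

theorem lemma4p1:
  fixes a c :: real
  assumes "a > 0" and "c > 0"
  shows "\<exists>C N0. \<forall>M0 N D t tb.
    0 < M0 \<and> N0 \<le> N \<and> real N \<le> real M0 powr a \<and>
    0 < D \<and> (\<forall>s\<le>N. bins M0 s dvd D) \<and> t \<le> N \<longrightarrow>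
    measure_pmf.prob (hash_pmf N D)
      {H. real (max_load M0 tb H t) > C * ln (ln (real N))} \<le> 1 / real N powr c"
proof -
  have ep: "1/a - 1/(2*a+2) > 0"
  proof -
    have "1/(2*a+2) < 1/a" by (rule divide_strict_left_mono) (use assms in auto)
    then show ?thesis by simp
  qed
  have ia: "0 < 1/a" using assms by simp
  have E1: "eventually (\<lambda>N::nat. 24 * (8 * (c + 3) * ln (real N)) \<le> real N powr (1/a)) sequentially"
    using ev_log[OF ia, of "24 * (8 * (c + 3))"] by (auto elim!: eventually_mono simp only: mult.assoc)
  have E2: "eventually (\<lambda>N::nat. 6 * (8 * (c + 3) * ln (real N))^2 \<le> real N powr (1/a - 1/(2*a+2))) sequentially"
    using ev_log2[OF ep, of "6 * (8 * (c + 3))^2"] by (auto elim!: eventually_mono simp only: power_mult_distrib mult.assoc)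
  have E4: "eventually (\<lambda>N::nat. real (nat \<lceil>(c+1)*(2*a+2)\<rceil> + 1) + 1 \<le> ln (ln (real N))) sequentially"
    by (rule ev_lnln)
  have E5: "eventually (\<lambda>N::nat. 16 \<le> N) sequentially" by (rule eventually_ge_at_top)
  have "eventually (\<lambda>N::nat. 16 \<le> N \<and> 24 * (8 * (c + 3) * ln (real N)) \<le> real N powr (1/a)
      \<and> 6 * (8 * (c + 3) * ln (real N))^2 \<le> real N powr (1/a - 1/(2*a+2))
      \<and> log 2 (ln (real N)) + 1 \<le> real N
      \<and> real (nat \<lceil>(c+1)*(2*a+2)\<rceil> + 1) + 1 \<le> ln (ln (real N))) sequentially"
    using E1 E2 ev_k0 E4 E5 by eventually_elim auto
  then obtain N0 where N0: "\<And>N. N0 \<le> N \<Longrightarrow> 16 \<le> N \<and> 24 * (8 * (c + 3) * ln (real N)) \<le> real N powr (1/a)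
      \<and> 6 * (8 * (c + 3) * ln (real N))^2 \<le> real N powr (1/a - 1/(2*a+2))
      \<and> log 2 (ln (real N)) + 1 \<le> real N
      \<and> real (nat \<lceil>(c+1)*(2*a+2)\<rceil> + 1) + 1 \<le> ln (ln (real N))"
    unfolding eventually_sequentially by blast
  show ?thesis
  proof (intro exI allI impI)
    fix M0 N D t :: nat and tb :: "nat \<Rightarrow> bool"
    assume h: "0 < M0 \<and> N0 \<le> N \<and> real N \<le> real M0 powr a \<and>
      0 < D \<and> (\<forall>s\<le>N. bins M0 s dvd D) \<and> t \<le> N"
    then have hN: "16 \<le> N \<and> 24 * (8 * (c + 3) * ln (real N)) \<le> real N powr (1/a)
      \<and> 6 * (8 * (c + 3) * ln (real N))^2 \<le> real N powr (1/a - 1/(2*a+2))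
      \<and> log 2 (ln (real N)) + 1 \<le> real N
      \<and> real (nat \<lceil>(c+1)*(2*a+2)\<rceil> + 1) + 1 \<le> ln (ln (real N))" using N0 by blast
    show "measure_pmf.prob (hash_pmf N D)
      {H. real (max_load M0 tb H t) > 3 * ln (ln (real N))} \<le> 1 / real N powr c"
      using main_bound[OF assms] hN h by blast
  qed
qed

end
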